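(* Let $p,q,r>0$ with $p+q+r=1$ and $q>p$, and consider the Markov chain on $\{0,1,2,\dots\}$ with $P(0,1)=1$ and, for $n\ge1$, $P(n,n-1)=q$, $P(n,n)=r$, $P(n,n+1)=p$, started at $X_0=0$; let $\mu_t$ be the distribution of $X_t$ and $\nu$ the stationary distribution. Let $$A=\frac{(1+q-p)(q+r)-q}{(1+q-p)(1-2p)},\qquad B=\frac{\frac{p}{q+r}\left(1+\frac{1}{\sqrt{pq}-p}\right)}{\left(1-\sqrt{\frac{p}{q}}\frac{r+(1+q-p)}{2(q+r)}\right)\left(1+\sqrt{\frac{p}{q}}\frac{r-(1+q-p)}{2(q+r)}\right)}.$$ If $\frac{q}{q+r}>r+2\sqrt{pq}$, then for all sufficiently large $t$, $$\|\nu-\mu_t\|_{TV}\ge A\left(\frac{q}{q+r}\right)^t - B\left(r+2\sqrt{pq}\right)^t.$$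
   Context: The stationary distribution is $\nu=\pi/\rho$ where $\pi_0=1$, $\pi_n=p^{n-1}/q^n$ ($n\ge1$) and $\rho=\sum_n\pi_n$. Total variation distance: $\|\nu-\mu\|_{TV}=\frac12\sum_{x}|\nu(x)-\mu(x)|$. *)

theory Defs
  imports "HOL-Analysis.Analysis"
begin

definition trans :: "real \<Rightarrow> real \<Rightarrow> real \<Rightarrow> nat \<Rightarrow> nat \<Rightarrow> real" where
  "trans p q r x y =
     (if x = 0 then (if y = 1 then 1 else 0)
      else if y = x - 1 then q
      else if y = x then r
      else if y = x + 1 then p
      else 0)"

fun mu :: "real \<Rightarrow> real \<Rightarrow> real \<Rightarrow> nat \<Rightarrow> nat \<Rightarrow> real" where
  "mu p q r 0 y = (if y = 0 then 1 else 0)"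
| "mu p q r (Suc t) y = (\<Sum>\<^sub>\<infinity>x\<in>UNIV. mu p q r t x * trans p q r x y)"

text \<open>Unnormalised stationary weights: pi_0 = 1, pi_n = p^(n-1)/q^n.\<close>
definition piw :: "real \<Rightarrow> real \<Rightarrow> nat \<Rightarrow> real" where
  "piw p q n = (if n = 0 then 1 else p ^ (n - 1) / q ^ n)"

definition stat :: "real \<Rightarrow> real \<Rightarrow> nat \<Rightarrow> real" where
  "stat p q n = piw p q n / (\<Sum>\<^sub>\<infinity>m\<in>UNIV. piw p q m)"

definition tv_dist :: "(nat \<Rightarrow> real) \<Rightarrow> (nat \<Rightarrow> real) \<Rightarrow> real" where
  "tv_dist a b = (1/2) * (\<Sum>\<^sub>\<infinity>x\<in>UNIV. \<bar>a x - b x\<bar>)"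

end

theory Submission
  imports Defs "HOL-Computational_Algebra.Formal_Power_Series"
begin
unbundle no vec_syntax
unbundle fps_syntax


fun Gc :: "real \<Rightarrow> real \<Rightarrow> real \<Rightarrow> nat \<Rightarrow> real" where
  "Gc p q r 0 = 0"
| "Gc p q r (Suc n) = (if n = 0 then q else 0) + r * Gc p q r n
     + p * (\<Sum>i=0..n. Gc p q r i * Gc p q r (n - i))"

definition GG :: "real \<Rightarrow> real \<Rightarrow> real \<Rightarrow> real fps" where
  "GG p q r = Abs_fps (Gc p q r)"

lemma GG_eq: "GG p q r = fps_X * (fps_const q + fps_const r * GG p q r + fps_const p * GG p q r ^ 2)"
proof (rule fps_ext)
  fix n show "GG p q r $ n = (fps_X * (fps_const q + fps_const r * GG p q r + fps_const p * GG p q r ^ 2)) $ n"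
    by (cases n) (auto simp: GG_def power2_eq_square fps_mult_nth[of "Abs_fps (Gc p q r)" "Abs_fps (Gc p q r)"])
qed

lemma GG0: "GG p q r $ 0 = 0" by (simp add: GG_def)

lemma trans_sum:
  fixes \<phi> :: "nat \<Rightarrow> real"
  shows "(\<Sum>\<^sub>\<infinity>x\<in>UNIV. \<phi> x * trans p q r x y) =
    (if y = 0 then q * \<phi> 1 else if y = 1 then \<phi> 0 + r * \<phi> 1 + q * \<phi> 2
     else p * \<phi> (y - 1) + r * \<phi> y + q * \<phi> (y + 1))"
proof -
  consider "y = 0" | "y = 1" | "y \<ge> 2" by linarith
  then show ?thesis
  proof cases
    case 1
    have "(\<Sum>\<^sub>\<infinity>x\<in>UNIV. \<phi> x * trans p q r x y) = (\<Sum>\<^sub>\<infinity>x\<in>{1}. \<phi> x * trans p q r x y)"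
      by (rule infsum_cong_neutral) (auto simp: trans_def 1)
    then show ?thesis by (simp add: trans_def 1)
  next
    case 2
    have "(\<Sum>\<^sub>\<infinity>x\<in>UNIV. \<phi> x * trans p q r x y) = (\<Sum>\<^sub>\<infinity>x\<in>{0,1,2}. \<phi> x * trans p q r x y)"
      by (rule infsum_cong_neutral) (auto simp: trans_def 2)
    then show ?thesis by (simp add: trans_def 2)
  next
    case 3
    have "(\<Sum>\<^sub>\<infinity>x\<in>UNIV. \<phi> x * trans p q r x y) = (\<Sum>\<^sub>\<infinity>x\<in>{y-1,y,y+1}. \<phi> x * trans p q r x y)"
      by (rule infsum_cong_neutral) (auto simp: trans_def)
    also have "\<dots> = p * \<phi> (y - 1) + r * \<phi> y + q * \<phi> (y + 1)"
    proof -
      obtain k where k: "y = Suc (Suc k)" using 3 by (metis add_2_eq_Suc le_Suc_ex)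
      show ?thesis by (simp add: trans_def k algebra_simps)
    qed
    finally show ?thesis using 3 by simp
  qed
qed


definition UU :: "real \<Rightarrow> real \<Rightarrow> real \<Rightarrow> real fps" where
  "UU p q r = inverse (1 - fps_X * GG p q r)"

lemma UU_eq: "UU p q r = 1 + fps_X * (UU p q r * GG p q r)"
proof -
  have "UU p q r * (1 - fps_X * GG p q r) = 1"
    unfolding UU_def by (rule inverse_mult_eq_1) simp
  then show ?thesis by (simp add: algebra_simps)
qed

lemma UU_Suc: "UU p q r $ Suc t = (UU p q r * GG p q r) $ t"
  by (subst UU_eq) simp

lemma UG_Suc:
  assumes "y \<ge> 1"
  shows "(UU p q r * GG p q r ^ y) $ Suc t =
    q * (UU p q r * GG p q r ^ (y - 1)) $ t + r * (UU p q r * GG p q r ^ y) $ t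
    + p * (UU p q r * GG p q r ^ (y + 1)) $ t"
proof -
  let ?G = "GG p q r" and ?U = "UU p q r"
  obtain k where k: "y = Suc k" using assms by (cases y) auto
  have "?U * ?G ^ y = ?U * ?G ^ k * ?G" by (simp add: k algebra_simps)
  also have "\<dots> = ?U * ?G ^ k * (fps_X * (fps_const q + fps_const r * ?G + fps_const p * ?G ^ 2))"
    by (subst GG_eq) simp
  also have "\<dots> = fps_X * (fps_const q * (?U * ?G ^ k) + fps_const r * (?U * ?G ^ Suc k)
      + fps_const p * (?U * ?G ^ Suc (Suc k)))"
    by (simp add: algebra_simps power2_eq_square)
  finally have eq: "?U * ?G ^ y = fps_X * (fps_const q * (?U * ?G ^ k) + fps_const r * (?U * ?G ^ Suc k)
      + fps_const p * (?U * ?G ^ Suc (Suc k)))" .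
  have "(?U * ?G ^ y) $ Suc t = (fps_X * (fps_const q * (?U * ?G ^ k) + fps_const r * (?U * ?G ^ Suc k)
      + fps_const p * (?U * ?G ^ Suc (Suc k)))) $ Suc t" by (subst eq) (rule refl)
  also have "\<dots> = q * (?U * ?G ^ k) $ t + r * (?U * ?G ^ Suc k) $ t + p * (?U * ?G ^ Suc (Suc k)) $ t"
    by (simp del: power_Suc)
  finally show ?thesis by (simp add: k del: power_Suc)
qed

lemma GG_pow_zero: "n < x \<Longrightarrow> (GG p q r ^ x) $ n = 0"
proof (induction x arbitrary: n)
  case 0 then show ?case by simp
next
  case (Suc x)
  have "(GG p q r ^ Suc x) $ n = (\<Sum>i=0..n. GG p q r $ i * (GG p q r ^ x) $ (n - i))"
    by (simp add: fps_mult_nth)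
  also have "\<dots> = 0"
  proof (rule sum.neutral, safe)
    fix i assume "i \<in> {0..n}"
    show "GG p q r $ i * (GG p q r ^ x) $ (n - i) = 0"
    proof (cases "i = 0")
      case True then show ?thesis by (simp add: GG0)
    next
      case False then have "n - i < x" using Suc.prems \<open>i \<in> {0..n}\<close> by auto
      then show ?thesis using Suc.IH by simp
    qed
  qed
  finally show ?case .
qed

lemma UG_zero: "x > t \<Longrightarrow> (UU p q r * GG p q r ^ x) $ t = 0"
  by (simp add: fps_mult_nth GG_pow_zero)

lemma UU0: "UU p q r $ 0 = 1"
  by (simp add: UU_def fps_inverse_def)

lemma mu_rep:
  assumes "p > 0" "q > 0"
  shows "mu p q r t y = piw p q y * (UU p q r * GG p q r ^ y) $ t"
proof (induction t arbitrary: y)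
  case 0
  then show ?case by (simp add: piw_def GG0 fps_power_zeroth UU0)
next
  case (Suc t)
  let ?G = "GG p q r" and ?U = "UU p q r"
  have rec: "mu p q r (Suc t) y = (if y = 0 then q * mu p q r t 1 else if y = 1 then mu p q r t 0 + r * mu p q r t 1 + q * mu p q r t 2
     else p * mu p q r t (y - 1) + r * mu p q r t y + q * mu p q r t (y + 1))"
    by (simp add: trans_sum)
  consider "y = 0" | "y = 1" | "y \<ge> 2" by linarith
  then show ?case
  proof cases
    case 1
    have "mu p q r (Suc t) y = q * mu p q r t 1" using rec 1 by (simp del: mu.simps)
    then show ?thesis using assms 1 by (simp add: Suc UU_Suc piw_def del: mu.simps)
  next
    case 2
    have "piw p q y * (?U * ?G ^ y) $ Suc t = (1/q) * (q * (?U * ?G ^ 0) $ t + r * (?U * ?G ^ 1) $ t + p * (?U * ?G ^ 2) $ t)"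
      using UG_Suc[where y=1 and t=t and p=p and q=q and r=r] 2 by (simp add: piw_def power2_eq_square)
    also have "\<dots> = mu p q r t 0 + r * mu p q r t 1 + q * mu p q r t 2"
      using assms by (simp add: Suc piw_def field_simps power2_eq_square del: mu.simps)
    finally show ?thesis using 2 rec by (simp del: mu.simps)
  next
    case 3
    obtain k where k: "y = Suc (Suc k)" using 3 by (metis add_2_eq_Suc le_Suc_ex)
    have "piw p q y * (?U * ?G ^ y) $ Suc t = piw p q y * (q * (?U * ?G ^ (y-1)) $ t + r * (?U * ?G ^ y) $ t + p * (?U * ?G ^ (y+1)) $ t)"
      using UG_Suc[where y=y and t=t and p=p and q=q and r=r] 3 by simp
    also have "\<dots> = p * mu p q r t (y - 1) + r * mu p q r t y + q * mu p q r t (y + 1)"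
      using assms by (simp add: Suc piw_def k field_simps del: mu.simps)
    finally show ?thesis using 3 rec by (simp del: mu.simps)
  qed
qed



definition inA :: "real \<Rightarrow> real fps \<Rightarrow> bool" where
  "inA R f \<longleftrightarrow> summable (\<lambda>n. \<bar>f $ n\<bar> * R ^ n)"

definition ev :: "real fps \<Rightarrow> real \<Rightarrow> real" where
  "ev f z = (\<Sum>n. f $ n * z ^ n)"

lemma inA_abs:
  assumes "inA R f" "\<bar>z\<bar> \<le> R"
  shows "summable (\<lambda>n. norm (f $ n * z ^ n))"
proof (rule summable_comparison_test[OF _ assms(1)[unfolded inA_def]])
  show "\<exists>N. \<forall>n\<ge>N. norm (norm (f $ n * z ^ n)) \<le> \<bar>f $ n\<bar> * R ^ n"
  proof (intro exI allI impI)
    fix n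
    have "\<bar>z\<bar> ^ n \<le> R ^ n" using assms(2) by (intro power_mono) auto
    then show "norm (norm (f $ n * z ^ n)) \<le> \<bar>f $ n\<bar> * R ^ n"
      by (simp add: abs_mult power_abs mult_left_mono)
  qed
qed

lemma ev_sums: "inA R f \<Longrightarrow> \<bar>z\<bar> \<le> R \<Longrightarrow> (\<lambda>n. f $ n * z ^ n) sums ev f z"
  unfolding ev_def by (rule summable_sums, rule summable_norm_cancel, rule inA_abs)

lemma summable_ev: "inA R f \<Longrightarrow> \<bar>z\<bar> \<le> R \<Longrightarrow> summable (\<lambda>n. f $ n * z ^ n)"
  using ev_sums sums_summable by metis

lemma inA_add: "inA R f \<Longrightarrow> inA R g \<Longrightarrow> R \<ge> 0 \<Longrightarrow> inA R (f + g)"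
  unfolding inA_def
  by (rule summable_comparison_test[OF _ summable_add[of "\<lambda>n. \<bar>f $ n\<bar> * R ^ n" "\<lambda>n. \<bar>g $ n\<bar> * R ^ n"]])
     (auto simp: distrib_right[symmetric] abs_mult intro!: exI[of _ 0] mult_right_mono abs_triangle_ineq)

lemma inA_cmult: "inA R f \<Longrightarrow> inA R (fps_const c * f)"
  unfolding inA_def using summable_mult[of "\<lambda>n. \<bar>f $ n\<bar> * R ^ n" "\<bar>c\<bar>"]
  by (simp add: abs_mult mult.assoc)

lemma inA_uminus: "inA R f \<Longrightarrow> inA R (- f)"
  unfolding inA_def by simp

lemma inA_diff: "inA R f \<Longrightarrow> inA R g \<Longrightarrow> R \<ge> 0 \<Longrightarrow> inA R (f - g)"
  using inA_add[of R f "- g"] inA_uminus by simp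

lemma inA_finite:
  assumes "\<And>n. n > N \<Longrightarrow> f $ n = 0"
  shows "inA R f"
  unfolding inA_def
  by (rule summable_finite[of "{..N}"]) (auto simp: assms)

lemma inA_const: "inA R (fps_const c)"
  by (rule inA_finite[of 0]) simp

lemma inA_one: "inA R 1"
  by (rule inA_finite[of 0]) simp

lemma inA_X: "inA R fps_X"
  by (rule inA_finite[of 1]) simp

lemma inA_mult:
  assumes f: "inA R f" and g: "inA R g" and R: "R \<ge> 0"
  shows "inA R (f * g)"
proof -
  let ?a = "\<lambda>n. \<bar>f $ n\<bar> * R ^ n" and ?b = "\<lambda>n. \<bar>g $ n\<bar> * R ^ n"
  have s: "summable (\<lambda>k. \<Sum>i\<le>k. ?a i * ?b (k - i))"
    by (rule summable_Cauchy_product) (use f g R in \<open>auto simp: inA_def\<close>)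
  show ?thesis unfolding inA_def
  proof (rule summable_comparison_test[OF _ s], intro exI allI impI)
    fix n
    have "norm (\<bar>(f * g) $ n\<bar> * R ^ n) = \<bar>\<Sum>i\<le>n. f $ i * g $ (n - i)\<bar> * R ^ n"
      using R by (simp add: fps_mult_nth atLeast0AtMost)
    also have "\<dots> \<le> (\<Sum>i\<le>n. \<bar>f $ i * g $ (n - i)\<bar>) * R ^ n"
      using R by (intro mult_right_mono sum_abs) auto
    also have "\<dots> = (\<Sum>i\<le>n. ?a i * ?b (n - i))"
      unfolding sum_distrib_right
    proof (rule sum.cong)
      fix i assume "i \<in> {..n}"
      then have "R ^ n = R ^ i * R ^ (n - i)" by (simp add: power_add[symmetric])
      then show "\<bar>f $ i * g $ (n - i)\<bar> * R ^ n = ?a i * ?b (n - i)" by (simp add: abs_mult mult_ac)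
    qed simp
    finally show "norm (\<bar>(f * g) $ n\<bar> * R ^ n) \<le> (\<Sum>i\<le>n. ?a i * ?b (n - i))" .
  qed
qed

lemma ev_add: "inA R f \<Longrightarrow> inA R g \<Longrightarrow> \<bar>z\<bar> \<le> R \<Longrightarrow> ev (f + g) z = ev f z + ev g z"
  using sums_add[OF ev_sums[of R f z] ev_sums[of R g z]]
  by (simp add: ev_def distrib_right sums_iff)

lemma ev_cmult: "inA R f \<Longrightarrow> \<bar>z\<bar> \<le> R \<Longrightarrow> ev (fps_const c * f) z = c * ev f z"
  using sums_mult[OF ev_sums[of R f z], of c]
  by (simp add: ev_def sums_iff mult.assoc)

lemma ev_uminus: "inA R f \<Longrightarrow> \<bar>z\<bar> \<le> R \<Longrightarrow> ev (- f) z = - ev f z"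
  unfolding ev_def using suminf_minus[OF summable_ev[of R f z]] by simp

lemma ev_diff: "inA R f \<Longrightarrow> inA R g \<Longrightarrow> \<bar>z\<bar> \<le> R \<Longrightarrow> ev (f - g) z = ev f z - ev g z"
  using ev_add[of R f "- g" z] ev_uminus[of R g z] inA_uminus[of R g] by simp

lemma ev_const: "ev (fps_const c) z = c"
proof -
  have "(\<lambda>n. fps_const c $ n * z ^ n) = (\<lambda>n. if n = 0 then c else 0)" by auto
  then show ?thesis unfolding ev_def using sums_single[of 0 "\<lambda>_. c"] sums_unique by force
qed

lemma ev_one: "ev 1 z = 1"
  using ev_const[of 1 z] by simp

lemma ev_X: "ev fps_X z = z"
proof -
  have "(\<lambda>n. fps_X $ n * z ^ n) = (\<lambda>n. if n = 1 then z else 0)" by auto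
  then show ?thesis unfolding ev_def using sums_single[of 1 "\<lambda>_. z"] sums_unique by force
qed

lemma ev_mult:
  assumes f: "inA R f" and g: "inA R g" and z: "\<bar>z\<bar> \<le> R"
  shows "ev (f * g) z = ev f z * ev g z"
proof -
  have "ev f z * ev g z = (\<Sum>k. \<Sum>i\<le>k. (f $ i * z ^ i) * (g $ (k - i) * z ^ (k - i)))"
    unfolding ev_def by (rule Cauchy_product) (use inA_abs[OF f z] inA_abs[OF g z] in auto)
  also have "\<dots> = (\<Sum>k. (f * g) $ k * z ^ k)"
  proof (rule suminf_cong)
    fix k
    have "(\<Sum>i\<le>k. (f $ i * z ^ i) * (g $ (k - i) * z ^ (k - i))) = (\<Sum>i\<le>k. f $ i * g $ (k - i) * z ^ k)"
      by (rule sum.cong) (auto simp: power_add[symmetric] mult_ac)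
    then show "(\<Sum>i\<le>k. (f $ i * z ^ i) * (g $ (k - i) * z ^ (k - i))) = (f * g) $ k * z ^ k"
      by (simp add: fps_mult_nth atLeast0AtMost sum_distrib_right)
  qed
  finally show ?thesis by (simp add: ev_def)
qed


lemma div_tendsto:
  assumes Z: "inA R Z" and R: "R > 0" and z0: "z0 \<noteq> 0" "\<bar>z0\<bar> \<le> R"
    and ev0: "ev Z z0 = 0" and QZ: "Q * (fps_X - fps_const z0) = Z"
  shows "(\<lambda>n. Q $ n * R ^ n) \<longlonglongrightarrow> 0"
proof -
  have e: "Z = fps_X * Q - fps_const z0 * Q" using QZ by (metis right_diff_distrib mult.commute)
  have cn: "Z $ n = (fps_X * Q) $ n - z0 * Q $ n" for n by (subst e) (simp only: fps_sub_nth fps_mult_left_const_nth)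
  have c0: "Z $ 0 = - z0 * Q $ 0" using cn[of 0] by simp
  have cS: "Z $ Suc n = Q $ n - z0 * Q $ Suc n" for n
    using cn[of "Suc n"] by simp
  have claim: "Q $ n * z0 ^ Suc n = - (\<Sum>k\<le>n. Z $ k * z0 ^ k)" for n
  proof (induction n)
    case 0 then show ?case using c0 by simp
  next
    case (Suc n)
    have "Q $ Suc n * z0 ^ Suc (Suc n) = z0 ^ Suc n * (z0 * Q $ Suc n)" by (simp add: mult_ac)
    also have "z0 * Q $ Suc n = Q $ n - Z $ Suc n" using cS[of n] by simp
    also have "z0 ^ Suc n * (Q $ n - Z $ Suc n) = Q $ n * z0 ^ Suc n - Z $ Suc n * z0 ^ Suc n"
      by (simp add: algebra_simps)
    also have "\<dots> = - (\<Sum>k\<le>Suc n. Z $ k * z0 ^ k)" using Suc.IH by simp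
    finally show ?case .
  qed
  let ?f = "\<lambda>k. Z $ k * z0 ^ k"
  let ?g = "\<lambda>k. \<bar>Z $ k\<bar> * R ^ k"
  have fs: "?f sums 0" using ev_sums[OF Z z0(2)] ev0 by simp
  have gsum: "summable ?g" using Z by (simp add: inA_def)
  have fabs: "summable (\<lambda>k. \<bar>?f k\<bar>)" using inA_abs[OF Z z0(2)] by simp
  have tail: "Q $ n * z0 ^ Suc n = (\<Sum>j. ?f (j + Suc n))" for n
  proof -
    have "(\<lambda>j. ?f (j + Suc n)) sums (0 - (\<Sum>i<Suc n. ?f i))" by (rule sums_split_initial_segment[OF fs])
    then show ?thesis using claim[of n] by (simp add: sums_iff lessThan_Suc_atMost)
  qed
  have bound: "\<bar>Q $ n * R ^ n\<bar> \<le> (1 / R) * (suminf ?g - (\<Sum>i<Suc n. ?g i))" for n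
  proof -
    have s1: "summable (\<lambda>j. \<bar>?f (j + Suc n)\<bar>)" using summable_ignore_initial_segment[OF fabs, of "Suc n"] by simp
    have s2: "summable (\<lambda>j. ?g (j + Suc n))" using summable_ignore_initial_segment[OF gsum, of "Suc n"] by simp
    have "\<bar>Q $ n\<bar> * \<bar>z0\<bar> ^ Suc n = \<bar>Q $ n * z0 ^ Suc n\<bar>" by (simp only: abs_mult power_abs)
    also have "\<dots> = \<bar>\<Sum>j. ?f (j + Suc n)\<bar>" by (simp only: tail[of n])
    also have "\<dots> \<le> (\<Sum>j. \<bar>?f (j + Suc n)\<bar>)" by (rule summable_rabs[OF s1])
    also have "\<dots> \<le> (\<Sum>j. ?g (j + Suc n) * (\<bar>z0\<bar> ^ Suc n / R ^ Suc n))"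
    proof (rule suminf_le[OF _ s1 summable_mult2[OF s2]])
      fix j
      have "\<bar>z0\<bar> ^ j \<le> R ^ j" using z0 by (intro power_mono) auto
      then have "\<bar>Z $ (j + Suc n)\<bar> * \<bar>z0\<bar> ^ j \<le> \<bar>Z $ (j + Suc n)\<bar> * R ^ j" by (intro mult_left_mono) auto
      then have "\<bar>Z $ (j + Suc n)\<bar> * \<bar>z0\<bar> ^ j * \<bar>z0\<bar> ^ Suc n \<le> \<bar>Z $ (j + Suc n)\<bar> * R ^ j * \<bar>z0\<bar> ^ Suc n"
        by (intro mult_right_mono) auto
      moreover have "\<bar>Z $ (j + Suc n)\<bar> * R ^ j * \<bar>z0\<bar> ^ Suc n = ?g (j + Suc n) * (\<bar>z0\<bar> ^ Suc n / R ^ Suc n)"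
        using R by (simp add: power_add field_simps)
      moreover have "\<bar>?f (j + Suc n)\<bar> = \<bar>Z $ (j + Suc n)\<bar> * \<bar>z0\<bar> ^ j * \<bar>z0\<bar> ^ Suc n"
        by (simp add: abs_mult power_abs power_add mult_ac)
      ultimately show "\<bar>?f (j + Suc n)\<bar> \<le> ?g (j + Suc n) * (\<bar>z0\<bar> ^ Suc n / R ^ Suc n)"
        by simp
    qed
    also have "\<dots> = (\<Sum>j. ?g (j + Suc n)) * (\<bar>z0\<bar> ^ Suc n / R ^ Suc n)"
      by (rule suminf_mult2[OF s2, symmetric])
    also have "(\<Sum>j. ?g (j + Suc n)) * (\<bar>z0\<bar> ^ Suc n / R ^ Suc n) = (suminf ?g - (\<Sum>i<Suc n. ?g i)) * (\<bar>z0\<bar> ^ Suc n / R ^ Suc n)"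
      using sums_split_initial_segment[OF summable_sums[OF gsum], of "Suc n"] by (simp only: sums_iff)
    finally have "\<bar>Q $ n\<bar> * \<bar>z0\<bar> ^ Suc n \<le> (suminf ?g - (\<Sum>i<Suc n. ?g i)) * (\<bar>z0\<bar> ^ Suc n / R ^ Suc n)" .
    then have h1: "\<bar>Q $ n\<bar> * \<bar>z0\<bar> ^ Suc n \<le> (suminf ?g - (\<Sum>i<Suc n. ?g i)) * (\<bar>z0\<bar> ^ Suc n / R ^ Suc n)" .
    define T where "T = suminf ?g - (\<Sum>i<Suc n. ?g i)"
    define a where "a = \<bar>z0\<bar> ^ Suc n"
    define b where "b = R ^ Suc n"
    have a0: "a > 0" using z0 by (simp add: a_def)
    have b0: "b > 0" using R by (simp add: b_def)
    have "\<bar>Q $ n\<bar> * a \<le> (T / b) * a" using h1 by (simp add: T_def a_def b_def divide_inverse ac_simps)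
    then have "\<bar>Q $ n\<bar> \<le> T / b" using a0 by (rule mult_right_le_imp_le)
    then have "\<bar>Q $ n\<bar> * R ^ n \<le> T / b * R ^ n" using R by (intro mult_right_mono) auto
    also have "T / b * R ^ n = (1 / R) * T" using R by (simp add: b_def)
    finally show ?thesis using R by (simp add: T_def abs_mult)
  qed
  have lim: "(\<lambda>n. (1 / R) * (suminf ?g - (\<Sum>i<Suc n. ?g i))) \<longlonglongrightarrow> 0"
  proof -
    have "(\<lambda>n. suminf ?g - (\<Sum>i<n. ?g i)) \<longlonglongrightarrow> suminf ?g - suminf ?g"
      by (intro tendsto_diff tendsto_const summable_LIMSEQ[OF gsum])
    then have "(\<lambda>n. suminf ?g - (\<Sum>i<Suc n. ?g i)) \<longlonglongrightarrow> 0"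
      using LIMSEQ_Suc[of "\<lambda>n. suminf ?g - (\<Sum>i<n. ?g i)"] by simp
    then show ?thesis using tendsto_mult_right_zero by blast
  qed
  show ?thesis
    by (rule Lim_null_comparison[OF _ lim]) (use bound in \<open>auto intro!: always_eventually\<close>)
qed



lemma double_sum_le:
  fixes a b :: "nat \<Rightarrow> real"
  assumes "\<And>n. a n \<ge> 0" "\<And>n. b n \<ge> 0"
  shows "(\<Sum>n<N. \<Sum>i\<le>n. a i * b (n - i)) \<le> (\<Sum>i<N. a i) * (\<Sum>j<N. b j)"
proof -
  have "(\<Sum>n<N. \<Sum>i\<le>n. a i * b (n - i)) = (\<Sum>(i,j)\<in>{(i,j). i+j < N}. a i * b j)"
    using sum.triangle_reindex[of "\<lambda>i j. a i * b j" N] by simp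
  also have "\<dots> \<le> (\<Sum>(i,j)\<in>{..<N} \<times> {..<N}. a i * b j)"
    by (rule sum_mono2) (auto intro: mult_nonneg_nonneg assms)
  also have "\<dots> = (\<Sum>i<N. a i) * (\<Sum>j<N. b j)"
    by (simp add: sum_product sum.cartesian_product)
  finally show ?thesis .
qed

locale chainP =
  fixes p q r :: real
  assumes p: "p > 0" and q: "q > 0" and r: "r > 0" and psum: "p + q + r = 1" and qp: "q > p"
begin

definition "rho = r + 2 * sqrt (p * q)"
definition "RR = 1 / rho"
definition "ss = sqrt (q / p)"
abbreviation "G \<equiv> GG p q r"

lemma sqrt_pq_lt: "2 * sqrt (p * q) < p + q"
proof -
  have e: "(p + q) ^ 2 - 4 * (p * q) = (q - p) ^ 2" by (simp add: power2_eq_square algebra_simps)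
  have "(q - p) ^ 2 > 0" using qp by simp
  then have "sqrt (4 * (p * q)) < sqrt ((p + q) ^ 2)"
    using e by (intro real_sqrt_less_mono) linarith
  then show ?thesis using p q by (simp add: real_sqrt_mult)
qed

lemma rho_pos: "rho > 0"
proof -
  have "sqrt (p * q) \<ge> 0" using p q by simp
  then show ?thesis using r unfolding rho_def by linarith
qed
lemma rho_lt1: "rho < 1" using sqrt_pq_lt psum by (simp add: rho_def)
lemma RR_gt1: "RR > 1" using rho_pos rho_lt1 by (simp add: RR_def)
lemma RR_pos: "RR > 0" using RR_gt1 by simp
lemma RR_rho: "RR * rho = 1" using rho_pos by (simp add: RR_def)

lemma ss_pos: "ss > 0" using p q by (simp add: ss_def)
lemma ss_sq: "ss ^ 2 = q / p" using p q by (simp add: ss_def)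
lemma ss_pq: "ss * sqrt (p * q) = q"
proof -
  have "ss * sqrt (p * q) = sqrt (q / p * (p * q))" unfolding ss_def by (rule real_sqrt_mult[symmetric])
  also have "q / p * (p * q) = q ^ 2" using p by (simp add: power2_eq_square field_simps)
  finally show ?thesis using q by simp
qed
lemma ss_gt1: "ss > 1" using p q qp by (simp add: ss_def)
lemma ss_fix: "RR * (q + r * ss + p * ss ^ 2) = ss"
proof -
  have "p * ss ^ 2 = q" using ss_sq p by simp
  then have "q + r * ss + p * ss ^ 2 = ss * rho" using ss_pq by (simp add: rho_def algebra_simps)
  then show ?thesis using RR_rho by (metis mult.assoc mult.commute mult_1)
qed

lemma Gc_nonneg: "Gc p q r n \<ge> 0"
proof (induction n rule: less_induct)
  case (less n)
  show ?case
  proof (cases n)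
    case (Suc m)
    have "(\<Sum>i=0..m. Gc p q r i * Gc p q r (m - i)) \<ge> 0"
      by (rule sum_nonneg) (use less Suc in auto)
    then show ?thesis using less[of m] Suc p q r by simp
  qed simp
qed

lemma G_nth: "G $ n = Gc p q r n" by (simp add: GG_def)

lemma G_partial: "(\<Sum>n<N. Gc p q r n * RR ^ n) \<le> ss"
proof (induction N)
  case 0 then show ?case using ss_pos by simp
next
  case (Suc N)
  let ?a = "\<lambda>n. Gc p q r n * RR ^ n"
  have a0: "?a n \<ge> 0" for n using Gc_nonneg RR_pos by simp
  have PS0: "(\<Sum>n<N. ?a n) \<ge> 0" by (rule sum_nonneg) (use a0 in auto)
  have "(\<Sum>n<Suc N. ?a n) = (\<Sum>n<N. ?a (Suc n))"
    by (subst sum.lessThan_Suc_shift) (simp add: G_nth)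
  also have "\<dots> = RR * ((\<Sum>n<N. (if n = 0 then q else 0) * RR ^ n) + r * (\<Sum>n<N. ?a n)
       + p * (\<Sum>n<N. \<Sum>i\<le>n. ?a i * ?a (n - i)))"
  proof -
    have pt: "?a (Suc n) = RR * ((if n = 0 then q else 0) * RR ^ n + r * ?a n + p * (\<Sum>i\<le>n. ?a i * ?a (n - i)))" for n
    proof -
      have "(\<Sum>i\<le>n. ?a i * ?a (n - i)) = (\<Sum>i=0..n. Gc p q r i * Gc p q r (n - i)) * RR ^ n"
        unfolding sum_distrib_right atLeast0AtMost
      proof (rule sum.cong)
        fix i assume "i \<in> {..n}"
        then have "RR ^ n = RR ^ i * RR ^ (n - i)" by (simp add: power_add[symmetric])
        then show "?a i * ?a (n - i) = Gc p q r i * Gc p q r (n - i) * RR ^ n" by (simp add: mult_ac)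
      qed simp
      then show ?thesis by (simp add: algebra_simps)
    qed
    have "(\<Sum>n<N. ?a (Suc n)) = (\<Sum>n<N. RR * ((if n = 0 then q else 0) * RR ^ n + r * ?a n + p * (\<Sum>i\<le>n. ?a i * ?a (n - i))))"
      by (rule sum.cong[OF refl pt])
    then show ?thesis by (simp only: distrib_left sum.distrib sum_distrib_left mult.assoc)
  qed
  also have "\<dots> \<le> RR * (q + r * ss + p * ss ^ 2)"
  proof -
    have 1: "(\<Sum>n<N. (if n = 0 then q else 0) * RR ^ n) \<le> q"
    proof -
      have "(\<Sum>n<N. (if n = 0 then q else 0) * RR ^ n) = (\<Sum>n\<in>{..<N} \<inter> {0}. q)"
        by (rule sum.mono_neutral_cong_right) auto
      also have "\<dots> \<le> q" using q by (cases N) auto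
      finally show ?thesis .
    qed
    have 2: "(\<Sum>n<N. \<Sum>i\<le>n. ?a i * ?a (n - i)) \<le> ss ^ 2"
    proof -
      have "(\<Sum>n<N. \<Sum>i\<le>n. ?a i * ?a (n - i)) \<le> (\<Sum>n<N. ?a n) * (\<Sum>n<N. ?a n)"
        by (rule double_sum_le) (use a0 in auto)
      also have "\<dots> \<le> ss * ss" using Suc.IH PS0 by (intro mult_mono) auto
      finally show ?thesis by (simp add: power2_eq_square)
    qed
    have "(\<Sum>n<N. (if n = 0 then q else 0) * RR ^ n) + r * (\<Sum>n<N. ?a n)
       + p * (\<Sum>n<N. \<Sum>i\<le>n. ?a i * ?a (n - i)) \<le> q + r * ss + p * ss ^ 2"
      using 1 2 Suc.IH r p by (intro add_mono mult_left_mono) auto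
    then show ?thesis using RR_pos by (intro mult_left_mono) auto
  qed
  also have "\<dots> = ss" by (rule ss_fix)
  finally show ?case .
qed

lemma inA_G: "inA RR G"
  unfolding inA_def G_nth
  by (rule summableI_nonneg_bounded[where x = ss]) (use Gc_nonneg G_partial RR_pos in auto)

lemma evG_bound: "\<bar>z\<bar> \<le> RR \<Longrightarrow> \<bar>ev G z\<bar> \<le> ss"
proof -
  assume z: "\<bar>z\<bar> \<le> RR"
  have s1: "summable (\<lambda>n. norm (G $ n * z ^ n))" by (rule inA_abs[OF inA_G z])
  have s2: "summable (\<lambda>n. \<bar>G $ n\<bar> * RR ^ n)" using inA_G by (simp add: inA_def)
  have "\<bar>ev G z\<bar> \<le> (\<Sum>n. norm (G $ n * z ^ n))" unfolding ev_def using summable_norm[OF s1] by simp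
  also have "\<dots> \<le> (\<Sum>n. \<bar>G $ n\<bar> * RR ^ n)"
  proof (rule suminf_le[OF _ s1 s2])
    fix n
    have "\<bar>z\<bar> ^ n \<le> RR ^ n" using z by (intro power_mono) auto
    then show "norm (G $ n * z ^ n) \<le> \<bar>G $ n\<bar> * RR ^ n" by (simp add: abs_mult power_abs mult_left_mono)
  qed
  also have "\<dots> \<le> ss"
    by (rule suminf_le_const[OF s2]) (use G_partial Gc_nonneg in \<open>simp add: G_nth\<close>)
  finally show ?thesis .
qed


definition "aa = p / q"
definition "TT = fps_const aa * G"
definition "PP = inverse (1 - TT)"
definition "MM = inverse (1 + TT)"
definition "II = fps_const (1 / q) * MM"

lemma aa_pos: "aa > 0" using p q by (simp add: aa_def)
lemma tau_lt1: "aa * ss < 1"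
proof -
  have "(aa * ss) ^ 2 = p / q" using ss_sq p q by (simp add: aa_def power_mult_distrib power2_eq_square field_simps)
  also have "\<dots> < 1" using p q qp by simp
  finally have "(aa * ss) ^ 2 < 1 ^ 2" by simp
  then show ?thesis using aa_pos ss_pos by (simp add: power_less_imp_less_base)
qed

lemma TT_nth: "TT $ n = aa * Gc p q r n" by (simp add: TT_def G_nth)
lemma TT0: "TT $ 0 = 0" by (simp add: TT_nth)
lemma TT_nonneg: "TT $ n \<ge> 0" using aa_pos Gc_nonneg by (simp add: TT_nth)

lemma PP_eq: "PP = 1 + TT * PP"
proof -
  have "PP * (1 - TT) = 1" unfolding PP_def by (rule inverse_mult_eq_1) (simp add: TT0)
  then show ?thesis by (simp add: algebra_simps)
qed

lemma MM_eq: "MM = 1 - TT * MM"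
proof -
  have "MM * (1 + TT) = 1" unfolding MM_def by (rule inverse_mult_eq_1) (simp add: TT0)
  then show ?thesis by (simp add: algebra_simps)
qed

lemma PP_nth: "PP $ n = (if n = 0 then 1 else 0) + (\<Sum>i=0..n. TT $ i * PP $ (n - i))"
  by (subst PP_eq) (simp add: fps_mult_nth)

lemma MM_nth: "MM $ n = (if n = 0 then 1 else 0) - (\<Sum>i=0..n. TT $ i * MM $ (n - i))"
  by (subst MM_eq) (simp add: fps_mult_nth)

lemma PP_nonneg: "PP $ n \<ge> 0"
proof (induction n rule: less_induct)
  case (less n)
  have "(\<Sum>i=0..n. TT $ i * PP $ (n - i)) \<ge> 0"
  proof (rule sum_nonneg)
    fix i assume i: "i \<in> {0..n}"
    show "TT $ i * PP $ (n - i) \<ge> 0"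
    proof (cases "i = 0")
      case True then show ?thesis by (simp add: TT0)
    next
      case False then have "n - i < n" using i by auto
      then show ?thesis using less TT_nonneg by simp
    qed
  qed
  then show ?case by (subst PP_nth) simp
qed

lemma MM_le_PP: "\<bar>MM $ n\<bar> \<le> PP $ n"
proof (induction n rule: less_induct)
  case (less n)
  have "\<bar>\<Sum>i=0..n. TT $ i * MM $ (n - i)\<bar> \<le> (\<Sum>i=0..n. TT $ i * PP $ (n - i))"
  proof -
    have "\<bar>\<Sum>i=0..n. TT $ i * MM $ (n - i)\<bar> \<le> (\<Sum>i=0..n. \<bar>TT $ i * MM $ (n - i)\<bar>)" by (rule sum_abs)
    also have "\<dots> \<le> (\<Sum>i=0..n. TT $ i * PP $ (n - i))"
    proof (rule sum_mono)
      fix i assume i: "i \<in> {0..n}"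
      show "\<bar>TT $ i * MM $ (n - i)\<bar> \<le> TT $ i * PP $ (n - i)"
      proof (cases "i = 0")
        case True then show ?thesis by (simp add: TT0)
      next
        case False then have "n - i < n" using i by auto
        then show ?thesis using less TT_nonneg by (simp add: abs_mult mult_left_mono)
      qed
    qed
    finally show ?thesis .
  qed
  then show ?case by (subst MM_nth, subst PP_nth) (cases "n = 0"; simp)
qed

lemma TT_partial: "(\<Sum>n<N. TT $ n * RR ^ n) \<le> aa * ss"
  using mult_left_mono[OF G_partial[of N], of aa] aa_pos
  by (simp add: TT_nth sum_distrib_left mult.assoc)

lemma PP_partial: "(\<Sum>n<N. PP $ n * RR ^ n) \<le> 1 / (1 - aa * ss)"
proof -
  let ?b = "\<lambda>n. PP $ n * RR ^ n" and ?t = "\<lambda>n. TT $ n * RR ^ n"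
  have b0: "?b n \<ge> 0" for n using PP_nonneg RR_pos by simp
  have t0: "?t n \<ge> 0" for n using TT_nonneg RR_pos by simp
  have S0: "(\<Sum>n<N. ?b n) \<ge> 0" by (rule sum_nonneg) (use b0 in auto)
  have "(\<Sum>n<N. ?b n) = (\<Sum>n<N. (if n = 0 then 1 else 0) * RR ^ n) + (\<Sum>n<N. \<Sum>i\<le>n. ?t i * ?b (n - i))"
  proof -
    have pt: "?b n = (if n = 0 then 1 else 0) * RR ^ n + (\<Sum>i\<le>n. ?t i * ?b (n - i))" for n
    proof -
      have "(\<Sum>i\<le>n. ?t i * ?b (n - i)) = (\<Sum>i=0..n. TT $ i * PP $ (n - i)) * RR ^ n"
        unfolding sum_distrib_right atLeast0AtMost
      proof (rule sum.cong)
        fix i assume "i \<in> {..n}"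
        then have "RR ^ n = RR ^ i * RR ^ (n - i)" by (simp add: power_add[symmetric])
        then show "?t i * ?b (n - i) = TT $ i * PP $ (n - i) * RR ^ n" by (simp add: mult_ac)
      qed simp
      then show ?thesis by (subst PP_nth) (simp add: algebra_simps)
    qed
    show ?thesis by (subst sum.cong[OF refl pt]) (simp add: sum.distrib)
  qed
  also have "\<dots> \<le> 1 + aa * ss * (\<Sum>n<N. ?b n)"
  proof (rule add_mono)
    have "(\<Sum>n<N. (if n = 0 then 1 else 0) * RR ^ n) = (\<Sum>n\<in>{..<N} \<inter> {0}. 1)"
      by (rule sum.mono_neutral_cong_right) auto
    also have "\<dots> \<le> 1" by (cases N) auto
    finally show "(\<Sum>n<N. (if n = 0 then 1 else 0) * RR ^ n) \<le> 1" .
    have "(\<Sum>n<N. \<Sum>i\<le>n. ?t i * ?b (n - i)) \<le> (\<Sum>n<N. ?t n) * (\<Sum>n<N. ?b n)"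
      by (rule double_sum_le) (use t0 b0 in auto)
    also have "\<dots> \<le> aa * ss * (\<Sum>n<N. ?b n)" using TT_partial S0 by (intro mult_right_mono) auto
    finally show "(\<Sum>n<N. \<Sum>i\<le>n. ?t i * ?b (n - i)) \<le> aa * ss * (\<Sum>n<N. ?b n)" .
  qed
  finally have "(1 - aa * ss) * (\<Sum>n<N. ?b n) \<le> 1" by (simp add: algebra_simps)
  then show ?thesis using tau_lt1 by (simp add: field_simps mult.commute)
qed

lemma inA_MM: "inA RR MM"
proof -
  have "summable (\<lambda>n. PP $ n * RR ^ n)"
    by (rule summableI_nonneg_bounded[where x = "1 / (1 - aa * ss)"]) (use PP_nonneg RR_pos PP_partial in auto)
  then show ?thesis unfolding inA_def
    by (rule summable_comparison_test[rotated]) (use MM_le_PP RR_pos in \<open>auto intro!: exI[of _ 0] mult_right_mono simp: abs_mult\<close>)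
qed

lemma inA_II: "inA RR II" unfolding II_def by (rule inA_cmult[OF inA_MM])

lemma II_eq: "II * (fps_const q + fps_const p * G) = 1"
proof -
  have "fps_const q + fps_const p * G = fps_const q * (1 + TT)"
    using q by (simp add: TT_def aa_def algebra_simps flip: fps_const_mult)
  moreover have "MM * (1 + TT) = 1" unfolding MM_def by (rule inverse_mult_eq_1) (simp add: TT0)
  moreover have "fps_const (1 / q) * fps_const q = (1 :: real fps)" using q by (simp flip: fps_const_mult)
  ultimately show ?thesis unfolding II_def
    by (metis (no_types, lifting) mult.assoc mult.commute mult_1)
qed

end


lemma mult_GG_pow_zero: "t < k \<Longrightarrow> (f * GG p q r ^ k) $ t = 0"
  by (simp add: fps_mult_nth GG_pow_zero)

lemma ring_aux:
  fixes Q P Rr C G :: "'a::comm_ring_1"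
  assumes "Q * C = 1" "P + Q + Rr = 1"
  shows "(Q + P * G) * (1 - C * G) = Q - (Q + Rr) * G + - P * C * (G * G)"
proof -
  have P: "P = 1 - Q - Rr" using assms(2) by (simp add: algebra_simps)
  have "(Q + P * G) * (1 - C * G) = Q - Q * C * G + P * G - P * C * (G * G)" by (simp add: algebra_simps)
  moreover have "Q * C * G = G" using assms(1) by simp
  moreover have "P * G = G - Q * G - Rr * G" unfolding P by (simp add: left_diff_distrib)
  ultimately have "(Q + P * G) * (1 - C * G) = Q - G + (G - Q * G - Rr * G) - P * C * (G * G)" by simp
  then show ?thesis by (simp add: algebra_simps)
qed

lemma step_aux:
  fixes Qc Pc G K X0 a b Gk :: "'a::comm_ring_1"
  assumes IH: "(Qc + Pc * G) * K = X0 + a * (G * Gk)"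
    and c: "a * (G * Gk) + Qc * b * (G * Gk) = 0"
  shows "(Qc + Pc * G) * (K + b * (G * Gk)) = X0 + Pc * b * (G * (G * Gk))"
proof -
  have "(Qc + Pc * G) * (K + b * (G * Gk)) = (Qc + Pc * G) * K + (Qc * b * (G * Gk)) + Pc * b * (G * (G * Gk))"
    by (simp add: algebra_simps)
  also have "\<dots> = X0 + (a * (G * Gk) + Qc * b * (G * Gk)) + Pc * b * (G * (G * Gk))" using IH by (simp add: algebra_simps)
  finally show ?thesis using c by simp
qed

lemma wwdd_aux:
  fixes H D Z c a E1 E2 P S X :: "'a::comm_ring_1"
  assumes "H * D = Z" "E1 * D = - P" "E2 * D = S * (X - 1)"
  shows "(H - c * E1 - a * E2) * D = Z + c * P - a * S * (X - 1)"
proof -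
  have "(H - c * E1 - a * E2) * D = H * D - c * (E1 * D) - a * (E2 * D)" by (simp add: algebra_simps)
  also have "\<dots> = Z - c * (- P) - a * (S * (X - 1))" by (simp only: assms)
  finally show ?thesis by (simp add: algebra_simps)
qed

lemma wq_aux:
  fixes w a b x :: "'a::comm_ring_1"
  shows "w * (a * (1 + b)) = w * a * (x + b) - w * a * (x - 1)"
  by (simp add: algebra_simps)

context chainP
begin

definition "NN = - fps_const q - fps_const r + fps_const r * fps_X + fps_const p * fps_X * G"
definition "DD = (fps_X - 1) * (fps_const q * fps_X + fps_const q + fps_const r)"
definition "VV = (fps_const q - (fps_const q + fps_const r) * G) * II"
definition "Hf = UU p q r * VV"
definition "ZZ = NN * VV"

lemma const_sum: "fps_const p + fps_const q + fps_const r = (1 :: real fps)"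
  using psum by (metis fps_const_1_eq_1 fps_const_add)

lemma G_expand: "G = fps_const q * fps_X + fps_const r * fps_X * G + fps_const p * fps_X * G ^ 2"
  by (subst GG_eq) (simp add: algebra_simps)

lemma NN_DD: "(1 - fps_X * G) * NN = DD"
  using G_expand const_sum unfolding NN_def DD_def by algebra

lemma Hf_DD: "Hf * DD = ZZ"
proof -
  have "UU p q r * (1 - fps_X * G) = 1" unfolding UU_def by (rule inverse_mult_eq_1) simp
  then show ?thesis unfolding Hf_def ZZ_def using NN_DD[symmetric]
    by (metis (no_types, lifting) mult.assoc mult.commute mult_1)
qed

definition "cc x = (-1) ^ x * piw p q x"
definition "KK N = (\<Sum>x\<le>N. fps_const (cc x) * G ^ x)"

lemma KK_eq: "N \<ge> 1 \<Longrightarrow> (fps_const q + fps_const p * G) * KK N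
   = fps_const q - (fps_const q + fps_const r) * G + fps_const (p * cc N) * G ^ Suc N"
proof (induction N rule: dec_induct)
  case base
  have "KK 1 = 1 - fps_const (1 / q) * G" by (simp add: KK_def cc_def piw_def) (metis fps_const_neg mult_minus_left)
  moreover have "fps_const q * fps_const (1 / q) = (1 :: real fps)" using q by (simp flip: fps_const_mult)
  moreover have "fps_const (p * cc 1) = - fps_const p * fps_const (1 / q)" by (simp add: cc_def piw_def flip: fps_const_mult)
  moreover have "G ^ Suc 1 = G * G" by simp
  ultimately show ?case using const_sum ring_aux by (simp only:)
next
  case (step N)
  have KS: "KK (Suc N) = KK N + fps_const (cc (Suc N)) * G ^ Suc N" by (simp add: KK_def)
  have c: "p * cc N + q * cc (Suc N) = 0"
    using step(1) p q by (cases N) (simp_all add: cc_def piw_def field_simps)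
  have "fps_const (p * cc N) + fps_const q * fps_const (cc (Suc N)) = fps_const (p * cc N + q * cc (Suc N))"
    by (simp only: fps_const_mult fps_const_add)
  then have "fps_const (p * cc N) + fps_const q * fps_const (cc (Suc N)) = (0 :: real fps)"
    using c by simp
  then have c': "fps_const (p * cc N) * (G * G ^ N) + fps_const q * fps_const (cc (Suc N)) * (G * G ^ N) = 0"
    by (metis distrib_right mult_zero_left)
  have e: "fps_const (p * cc (Suc N)) = fps_const p * fps_const (cc (Suc N))" by (simp flip: fps_const_mult)
  have IH: "(fps_const q + fps_const p * G) * KK N = (fps_const q - (fps_const q + fps_const r) * G) + fps_const (p * cc N) * (G * G ^ N)"
    using step(3) by simp
  show ?case unfolding KS e power_Suc
    using step_aux[OF IH c'] by (simp add: mult.assoc)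
qed


lemma UKK_nth:
  assumes "N \<ge> 1" "t \<le> N"
  shows "(UU p q r * KK N) $ t = Hf $ t"
proof -
  let ?V' = "fps_const q - (fps_const q + fps_const r) * G"
  have "KK N = II * (fps_const q + fps_const p * G) * KK N" using II_eq by simp
  also have "\<dots> = II * (?V' + fps_const (p * cc N) * G ^ Suc N)" using KK_eq[OF assms(1)] by (simp add: mult.assoc)
  also have "\<dots> = VV + (II * fps_const (p * cc N)) * G ^ Suc N" by (simp add: VV_def algebra_simps)
  finally have "UU p q r * KK N = Hf + (UU p q r * II * fps_const (p * cc N)) * G ^ Suc N"
    by (simp add: Hf_def algebra_simps)
  moreover have "((UU p q r * II * fps_const (p * cc N)) * G ^ Suc N) $ t = 0"
    using assms(2) by (intro mult_GG_pow_zero) simp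
  ultimately show ?thesis by simp
qed

lemma H_sum:
  assumes "N \<ge> 1" "t \<le> N"
  shows "(\<Sum>x\<le>N. (-1) ^ x * mu p q r t x) = Hf $ t"
proof -
  have "(\<Sum>x\<le>N. (-1) ^ x * mu p q r t x) = (\<Sum>x\<le>N. (UU p q r * (fps_const (cc x) * G ^ x)) $ t)"
  proof (rule sum.cong)
    fix x
    have "(UU p q r * (fps_const (cc x) * G ^ x)) $ t = cc x * (UU p q r * G ^ x) $ t"
      by (simp only: mult.left_commute[of "UU p q r"] fps_mult_left_const_nth)
    then show "(-1) ^ x * mu p q r t x = (UU p q r * (fps_const (cc x) * G ^ x)) $ t"
      using mu_rep[OF p q, where r=r and t=t and y=x] by (simp add: cc_def)
  qed simp
  also have "\<dots> = (UU p q r * KK N) $ t"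
    by (simp add: KK_def sum_distrib_left fps_sum_nth)
  also have "\<dots> = Hf $ t" by (rule UKK_nth[OF assms])
  finally show ?thesis .
qed

definition "lam = q / (q + r)"
definition "uu = (q + r) / q"
definition "c0 = - (q - p) * r / ((p + q) * (1 + q - p))"
definition "alpha = 2 * (((1 + q - p) * (q + r) - q) / ((1 + q - p) * (1 - 2 * p)))"
definition "E1 = Abs_fps (\<lambda>n. 1 :: real)"
definition "E2 = Abs_fps (\<lambda>n. (- lam) ^ n)"
definition "WW = Hf - fps_const c0 * E1 - fps_const alpha * E2"
definition "ZZ' = ZZ + fps_const c0 * (fps_const q * fps_X + fps_const q + fps_const r) - fps_const alpha * fps_const (q + r) * (fps_X - 1)"

lemma E1_eq: "E1 * (fps_X - 1) = - 1"
proof (rule fps_ext)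
  fix n show "(E1 * (fps_X - 1)) $ n = (- 1 :: real fps) $ n"
    by (simp add: E1_def algebra_simps)
qed

lemma E2_eq: "E2 * (1 + fps_const lam * fps_X) = 1"
proof (rule fps_ext)
  fix n show "(E2 * (1 + fps_const lam * fps_X)) $ n = (1 :: real fps) $ n"
    by (cases n) (simp_all add: E2_def algebra_simps)
qed

lemma lam_u: "lam * uu = 1" using q r by (simp add: lam_def uu_def)

lemma DD_alt1: "fps_const q * fps_X + fps_const q + fps_const r = fps_const (q + r) * (1 + fps_const lam * fps_X)"
proof -
  have "(q + r) * lam = q" using q r by (simp add: lam_def)
  then have "fps_const (q + r) * fps_const lam = fps_const q" by (metis fps_const_mult)
  then show ?thesis by (simp add: algebra_simps flip: fps_const_add)
qed

lemma DD_alt2: "DD = fps_const q * (fps_X - 1) * (fps_X + fps_const uu)"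
proof -
  have "q * uu = q + r" using q by (simp add: uu_def)
  then have "fps_const q * fps_const uu = fps_const q + fps_const r" by (metis fps_const_mult fps_const_add)
  then show ?thesis unfolding DD_def by (simp add: algebra_simps)
qed

lemma WW_DD: "WW * DD = ZZ'"
proof -
  have 1: "E1 * DD = - (fps_const q * fps_X + fps_const q + fps_const r)"
    unfolding DD_def by (simp add: mult.assoc[symmetric] E1_eq)
  have 2: "E2 * DD = fps_const (q + r) * (fps_X - 1)"
    unfolding DD_def DD_alt1 using E2_eq by (metis (no_types, lifting) mult.assoc mult.commute mult_1)
  show ?thesis unfolding WW_def ZZ'_def by (rule wwdd_aux[OF Hf_DD 1 2])
qed

definition "Q1 = WW * fps_const q * (fps_X + fps_const uu)"
definition "Q2 = WW * fps_const q * (fps_X - 1)"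

lemma Q1_eq: "Q1 * (fps_X - fps_const 1) = ZZ'"
  unfolding Q1_def WW_DD[symmetric] DD_alt2 fps_const_1_eq_1 by (simp only: mult_ac)

lemma Q2_eq: "Q2 * (fps_X - fps_const (- uu)) = ZZ'"
proof -
  have "fps_X - fps_const (- uu) = fps_X + fps_const uu" by (simp flip: fps_const_neg)
  then show ?thesis unfolding Q2_def WW_DD[symmetric] DD_alt2 by (simp only: mult_ac)
qed

lemma WW_Q: "WW * fps_const (q * (1 + uu)) = Q1 - Q2"
proof -
  have "fps_const (q * (1 + uu)) = fps_const q * (1 + fps_const uu)" by (metis fps_const_mult fps_const_add fps_const_1_eq_1)
  then show ?thesis unfolding Q1_def Q2_def by (simp only: wq_aux)
qed

lemma Hf_nth: "Hf $ n = c0 + alpha * (- lam) ^ n + WW $ n"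
  by (simp add: WW_def E1_def E2_def)

end


lemma frac_aux:
  fixes a b c q s :: real
  assumes "b \<noteq> 0" "c \<noteq> 0" "q \<noteq> 0"
  shows "a / (b * c) * s * (- b / q) = - (a * s) / (q * c)"
  using assms by (simp add: field_simps)

lemma frac2:
  fixes x y z q c :: real
  assumes "q \<noteq> 0" "c \<noteq> 0"
  shows "x / q * (y / c) + z / (q * c) = (x * y + z) / (q * c)"
  using assms by (simp add: field_simps)

locale chainH = chainP +
  assumes gap: "q / (q + r) > r + 2 * sqrt (p * q)"
begin

lemma lam_gt: "lam > rho" using gap by (simp add: lam_def rho_def)
lemma lam_pos: "lam > 0" using q r by (simp add: lam_def)
lemma uu_le: "uu \<le> RR"
proof -
  have "uu = 1 / lam" using q r by (simp add: uu_def lam_def)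
  also have "\<dots> \<le> 1 / rho" using lam_gt rho_pos by (intro divide_left_mono) auto
  finally show ?thesis by (simp add: RR_def)
qed
lemma one_le: "1 \<le> RR" using RR_gt1 by simp
lemma uu_pos: "uu > 0" using q r by (simp add: uu_def)

lemma RR0: "RR \<ge> 0" using RR_pos by simp

lemma inA_NN: "inA RR NN"
  unfolding NN_def
  by (intro inA_add inA_diff inA_uminus inA_mult inA_const inA_X inA_G RR0)

lemma inA_VV: "inA RR VV"
  unfolding VV_def
  by (intro inA_add inA_diff inA_uminus inA_mult inA_const inA_X inA_G inA_II RR0)

lemma inA_ZZ': "inA RR ZZ'"
  unfolding ZZ'_def ZZ_def
  by (intro inA_add inA_diff inA_uminus inA_mult inA_const inA_X inA_G inA_II inA_one inA_NN inA_VV RR0)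

lemma evG_eq:
  assumes z: "\<bar>z\<bar> \<le> RR"
  shows "ev G z = z * (q + r * ev G z + p * ev G z ^ 2)"
proof -
  have "ev G z = ev (fps_X * (fps_const q + fps_const r * G + fps_const p * (G * G))) z"
    by (subst GG_eq) (simp add: power2_eq_square)
  also have "\<dots> = z * (q + r * ev G z + p * (ev G z * ev G z))"
    using z
    by (simp add: ev_mult[OF _ _ z] ev_add[OF _ _ z] ev_cmult[OF _ z] ev_const ev_X inA_add inA_mult inA_cmult inA_const inA_X inA_G RR0)
  finally show ?thesis by (simp add: power2_eq_square)
qed

lemma evII: "\<bar>z\<bar> \<le> RR \<Longrightarrow> ev II z * (q + p * ev G z) = 1"
proof -
  assume z: "\<bar>z\<bar> \<le> RR"
  have "ev (II * (fps_const q + fps_const p * G)) z = 1" using II_eq ev_one by simp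
  then show ?thesis using z
    by (simp add: ev_mult[OF _ _ z] ev_add[OF _ _ z] ev_cmult[OF _ z] ev_const inA_add inA_mult inA_cmult inA_const inA_G inA_II RR0)
qed

lemma evZZ':
  assumes z: "\<bar>z\<bar> \<le> RR"
  shows "ev ZZ' z = (- q - r + r * z + p * z * ev G z) * ((q - (q + r) * ev G z) * ev II z)
    + c0 * (q * z + q + r) - alpha * (q + r) * (z - 1)"
  unfolding ZZ'_def ZZ_def NN_def VV_def using z
  by (simp add: ev_mult[OF _ _ z] ev_add[OF _ _ z] ev_diff[OF _ _ z] ev_uminus[OF _ z] ev_cmult[OF _ z] ev_const ev_X ev_one
       inA_add inA_diff inA_uminus inA_mult inA_cmult inA_const inA_X inA_G inA_II inA_one RR0 mult.assoc)


lemma qp_ss: "q / p > ss"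
proof -
  have "q / p = ss * ss" using ss_sq by (simp add: power2_eq_square)
  then show ?thesis using ss_gt1 by simp
qed

lemma evG1: "ev G 1 = 1"
proof -
  define y where "y = ev G 1"
  have eq: "y = q + r * y + p * y ^ 2" using evG_eq[of 1] one_le by (simp add: y_def)
  have rr: "r = 1 - p - q" using psum by simp
  have "(y - 1) * (p * y - q) = p * y ^ 2 + (r - 1) * y + q" unfolding rr by (simp add: algebra_simps power2_eq_square)
  also have "\<dots> = 0" using eq by (simp add: algebra_simps)
  finally have f: "(y - 1) * (p * y - q) = 0" .
  have "\<bar>y\<bar> \<le> ss" using evG_bound[of 1] one_le by (simp add: y_def)
  then have "y < q / p" using qp_ss by simp
  then have "p * y - q \<noteq> 0" using p by (simp add: field_simps)
  then show ?thesis using f by (simp add: y_def)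
qed

lemma evGu: "ev G (- uu) = - lam"
proof -
  define y where "y = ev G (- uu)"
  have z: "\<bar>- uu\<bar> \<le> RR" using uu_le uu_pos by simp
  have eq: "y = - uu * (q + r * y + p * y ^ 2)" using evG_eq[OF z] by (simp add: y_def)
  have key: "p + q * uu ^ 2 = 1 + r * uu"
  proof -
    have pp: "p = 1 - q - r" using psum by simp
    show ?thesis unfolding pp uu_def using q by (simp add: power2_eq_square field_simps)
  qed
  have lu: "lam * uu = 1" by (rule lam_u)
  have "p * uu * (y + lam) * (y + q * uu / p) = p * uu * y ^ 2 + (p * uu * lam + q * uu ^ 2) * y + q * uu ^ 2 * lam"
    using p by (simp add: algebra_simps power2_eq_square)
  also have "\<dots> = p * uu * y ^ 2 + (p + q * uu ^ 2) * y + q * uu"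
    using lu by (simp add: algebra_simps power2_eq_square)
  also have "\<dots> = p * uu * y ^ 2 + (1 + r * uu) * y + q * uu" using key by simp
  also have "\<dots> = 0" using eq by (simp add: algebra_simps)
  finally have f: "p * uu * (y + lam) * (y + q * uu / p) = 0" .
  have "\<bar>y\<bar> \<le> ss" using evG_bound[OF z] by (simp add: y_def)
  moreover have "q * uu / p > ss"
  proof -
    have "uu > 1" using q r by (simp add: uu_def)
    then have "q * uu / p > q / p" using p q by (simp add: field_simps)
    then show ?thesis using qp_ss by simp
  qed
  ultimately have "y + q * uu / p \<noteq> 0" by linarith
  then have "y + lam = 0" using f p uu_pos by simp
  then show ?thesis by (simp add: y_def)
qed


lemma p_half: "1 - 2 * p > 0" using psum qp r by linarith

lemma evZZ'1: "ev ZZ' 1 = 0"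
proof -
  have z: "\<bar>1::real\<bar> \<le> RR" using one_le by simp
  have e: "ev II 1 = 1 / (p + q)" using evII[OF z] evG1 p q by (simp add: field_simps)
  have d: "1 + q - p \<noteq> 0" using qp by simp
  have d': "p + q \<noteq> 0" using p q by simp
  have h: "q * 1 + q + r = 1 + q - p" using psum by simp
  have "c0 * (q * 1 + q + r) = - (q - p) * r / (p + q)" unfolding h c0_def using d d' by simp
  moreover have "(- q - r + r * 1 + p * 1 * 1) * ((q - (q + r) * 1) * (1 / (p + q))) = (q - p) * r / (p + q)"
    using d' by (simp add: field_simps)
  moreover have "ev ZZ' 1 = (- q - r + r * 1 + p * 1 * 1) * ((q - (q + r) * 1) * (1 / (p + q)))
    + c0 * (q * 1 + q + r) - alpha * (q + r) * (1 - 1)"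
    unfolding evZZ'[OF z] evG1 e by simp
  ultimately show ?thesis by simp
qed

lemma evZZ'u: "ev ZZ' (- uu) = 0"
proof -
  have z: "\<bar>- uu\<bar> \<le> RR" using uu_le uu_pos by simp
  define s where "s = q + r"
  have pp: "p = 1 - s" using psum by (simp add: s_def)
  have s0: "s > 0" using q r by (simp add: s_def)
  have s1: "2 * s - 1 > 0" using p_half pp by simp
  have lam_s: "lam = q / s" by (simp add: lam_def s_def)
  have uu_s: "uu = s / q" by (simp add: uu_def s_def)
  have pl: "q - p * lam = q * (2 * s - 1) / s" unfolding pp lam_s using s0 by (simp add: field_simps)
  have pl0: "q - p * lam \<noteq> 0" unfolding pl using q s0 s1 by simp
  have e: "ev II (- uu) = 1 / (q - p * lam)" using evII[OF z] evGu pl0 by (simp add: field_simps)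
  have V: "(q - (q + r) * (- lam)) * (1 / (q - p * lam)) = 2 * s / (2 * s - 1)"
    unfolding pl unfolding lam_s s_def[symmetric] using q s0 s1 by (simp add: field_simps)
  have N: "- q - r + r * (- uu) + p * (- uu) * (- lam) = (q - 2 * s * q - r * s) / q"
  proof -
    have "p * (- uu) * (- lam) = p" using lam_u by (simp add: mult.commute mult.left_commute)
    then have "- q - r + r * (- uu) + p * (- uu) * (- lam) = - q - r + r * (- uu) + p" by simp
    also have "\<dots> = (q - 2 * s * q - r * s) / q" unfolding uu_s pp using q by (simp add: s_def field_simps)
    finally show ?thesis .
  qed
  have C: "q * (- uu) + q + r = 0" unfolding uu_s using q by (simp add: s_def field_simps)
  have A: "alpha * (q + r) * (- uu - 1) = - (2 * s * ((q + s) * s - q)) / (q * (2 * s - 1))"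
  proof -
    have h1: "1 + q - p = q + s" unfolding pp by simp
    have h2: "1 - 2 * p = 2 * s - 1" unfolding pp by simp
    have al: "alpha = 2 * ((q + s) * s - q) / ((q + s) * (2 * s - 1))"
      unfolding alpha_def h1 h2 s_def[symmetric] by simp
    have um: "- uu - 1 = - (q + s) / q" using q by (simp add: uu_s field_simps)
    have "alpha * (q + r) * (- uu - 1) = 2 * ((q + s) * s - q) / ((q + s) * (2 * s - 1)) * s * (- (q + s) / q)"
      unfolding al um s_def[symmetric] by simp
    also have "\<dots> = - (2 * s * ((q + s) * s - q)) / (q * (2 * s - 1))"
    proof -
      have "q + s \<noteq> 0" "2 * s - 1 \<noteq> 0" "q \<noteq> 0" using q s0 s1 by auto
      then show ?thesis using frac_aux[of "q + s" "2 * s - 1" q "2 * ((q + s) * s - q)" s] by (simp add: mult_ac)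
    qed
    finally show ?thesis .
  qed
  have "ev ZZ' (- uu) = (- q - r + r * (- uu) + p * (- uu) * (- lam)) * ((q - (q + r) * (- lam)) * (1 / (q - p * lam)))
    + c0 * (q * (- uu) + q + r) - alpha * (q + r) * (- uu - 1)"
    unfolding evZZ'[OF z] evGu e by simp
  also have "\<dots> = (q - 2 * s * q - r * s) / q * (2 * s / (2 * s - 1)) + 2 * s * ((q + s) * s - q) / (q * (2 * s - 1))"
    unfolding N V C A by simp
  also have "\<dots> = ((q - 2 * s * q - r * s) * (2 * s) + 2 * s * ((q + s) * s - q)) / (q * (2 * s - 1))"
    using q s1 by (intro frac2) auto
  also have "(q - 2 * s * q - r * s) * (2 * s) + 2 * s * ((q + s) * s - q) = 2 * s * (q - 2 * s * q - r * s + (q + s) * s - q)"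
    by (simp add: algebra_simps)
  also have "q - 2 * s * q - r * s + (q + s) * s - q = 0" by (simp add: s_def algebra_simps)
  finally show ?thesis by simp
qed

lemma WW_lim: "(\<lambda>n. WW $ n * RR ^ n) \<longlonglongrightarrow> 0"
proof -
  have l1: "(\<lambda>n. Q1 $ n * RR ^ n) \<longlonglongrightarrow> 0"
    by (rule div_tendsto[OF inA_ZZ' RR_pos _ _ evZZ'1 Q1_eq]) (use one_le in auto)
  have l2: "(\<lambda>n. Q2 $ n * RR ^ n) \<longlonglongrightarrow> 0"
    by (rule div_tendsto[OF inA_ZZ' RR_pos _ _ evZZ'u Q2_eq]) (use uu_le uu_pos in auto)
  have k: "q * (1 + uu) > 0" using q uu_pos by simp
  have "WW $ n * RR ^ n = (Q1 $ n * RR ^ n - Q2 $ n * RR ^ n) / (q * (1 + uu))" for n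
  proof -
    have "WW $ n * (q * (1 + uu)) = Q1 $ n - Q2 $ n" using arg_cong[OF WW_Q, of "\<lambda>f. f $ n"] by simp
    then have "WW $ n = (Q1 $ n - Q2 $ n) / (q * (1 + uu))" using k by (simp add: field_simps)
    then show ?thesis by (simp add: field_simps)
  qed
  moreover have "(\<lambda>n. (Q1 $ n * RR ^ n - Q2 $ n * RR ^ n) / (q * (1 + uu))) \<longlonglongrightarrow> (0 - 0) / (q * (1 + uu))"
    by (intro tendsto_divide tendsto_diff l1 l2 tendsto_const) (use k in auto)
  ultimately show ?thesis by simp
qed

end


lemma infsum_nat_eq_suminf:
  fixes f :: "nat \<Rightarrow> real"
  assumes "summable (\<lambda>n. \<bar>f n\<bar>)"
  shows "infsum f UNIV = suminf f"
proof -
  have "f summable_on UNIV" using assms by (intro norm_summable_imp_summable_on) simp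
  then have "f sums infsum f UNIV" using has_sum_imp_sums has_sum_infsum by blast
  then show ?thesis by (simp add: sums_iff)
qed

lemma frac3:
  fixes b c d r :: real
  assumes "b \<noteq> 0" "c \<noteq> 0" "d \<noteq> 0"
  shows "(- r / b) / (c / d) = - (d * r) / (b * c)"
  using assms by (simp add: field_simps)

context chainH
begin

lemma piw_sums: "(\<lambda>n. piw p q n) sums (1 / (q - p) + 1)"
proof -
  have g: "(\<lambda>n. (p / q) ^ n) sums (1 / (1 - p / q))" using p q qp by (intro geometric_sums) simp
  have "(\<lambda>n. (1 / q) * (p / q) ^ n) sums ((1 / q) * (1 / (1 - p / q)))" by (rule sums_mult[OF g])
  moreover have "(1 / q) * (1 / (1 - p / q)) = 1 / (q - p)" using q qp by (simp add: field_simps)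
  moreover have "(\<lambda>n. (1 / q) * (p / q) ^ n) = (\<lambda>n. piw p q (Suc n))"
    by (rule ext) (simp add: piw_def power_divide)
  ultimately have "(\<lambda>n. piw p q (Suc n)) sums (1 / (q - p))" by simp
  then have "piw p q sums (1 / (q - p) + piw p q 0)" by (simp only: sums_Suc_iff)
  moreover have "piw p q 0 = 1" by (simp add: piw_def)
  ultimately show ?thesis by simp
qed

lemma piw_alt_sums: "(\<lambda>n. (-1) ^ n * piw p q n) sums (1 - 1 / (q + p))"
proof -
  have g: "(\<lambda>n. (- p / q) ^ n) sums (1 / (1 - (- p / q)))" using p q qp by (intro geometric_sums) simp
  have "(\<lambda>n. (- 1 / q) * (- p / q) ^ n) sums ((- 1 / q) * (1 / (1 - (- p / q))))" by (rule sums_mult[OF g])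
  moreover have "(- 1 / q) * (1 / (1 - (- p / q))) = - (1 / (q + p))" using p q by (simp add: field_simps)
  moreover have "(\<lambda>n. (- 1 / q) * (- p / q) ^ n) = (\<lambda>n. (-1) ^ Suc n * piw p q (Suc n))"
  proof (rule ext)
    fix n
    have "- p / q = (-1) * (p / q)" by simp
    then have e: "(- p / q) ^ n = (-1) ^ n * (p ^ n / q ^ n)" by (simp only: power_mult_distrib power_divide)
    show "(- 1 / q) * (- p / q) ^ n = (-1) ^ Suc n * piw p q (Suc n)"
      unfolding e using q by (simp add: piw_def field_simps)
  qed
  ultimately have "(\<lambda>n. (-1) ^ Suc n * piw p q (Suc n)) sums (- (1 / (q + p)))" by simp
  then have "(\<lambda>n. (-1) ^ n * piw p q n) sums (- (1 / (q + p)) + (-1) ^ 0 * piw p q 0)"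
    using sums_Suc_iff[of "\<lambda>n. (-1) ^ n * piw p q n"] by simp
  moreover have "(-1) ^ 0 * piw p q 0 = 1" by (simp add: piw_def)
  ultimately show ?thesis by simp
qed

definition "SS = 1 / (q - p) + 1"

lemma SS_pos: "SS > 0"
proof -
  have "1 / (q - p) > 0" using qp by simp
  then show ?thesis unfolding SS_def by linarith
qed

lemma piw_nonneg: "piw p q n \<ge> 0" using p q by (simp add: piw_def)

lemma stat_eq: "stat p q n = piw p q n / SS"
proof -
  have "infsum (piw p q) UNIV = suminf (piw p q)"
    by (rule infsum_nat_eq_suminf) (use piw_sums piw_nonneg in \<open>simp add: sums_summable\<close>)
  also have "\<dots> = SS" using piw_sums by (simp add: sums_iff SS_def)
  finally show ?thesis by (simp add: stat_def)
qed

lemma stat_sums: "(\<lambda>n. stat p q n) sums 1"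
proof -
  have "(\<lambda>n. piw p q n / SS) sums (SS / SS)" using sums_divide[OF piw_sums[folded SS_def], of SS] by simp
  then show ?thesis using SS_pos by (simp add: stat_eq)
qed

lemma stat_alt_sums: "(\<lambda>n. (-1) ^ n * stat p q n) sums c0"
proof -
  have "(\<lambda>n. (-1) ^ n * piw p q n / SS) sums ((1 - 1 / (q + p)) / SS)" by (rule sums_divide[OF piw_alt_sums])
  moreover have "(1 - 1 / (q + p)) / SS = c0"
  proof -
    have pp: "p + q + r = 1" by (rule psum)
    have rr: "r = 1 - p - q" using pp by simp
    have "1 - 1 / (q + p) = - r / (q + p)" using p q unfolding rr by (simp add: field_simps)
    moreover have "SS = (1 + q - p) / (q - p)" using qp by (simp add: SS_def field_simps)
    moreover have n1: "q + p \<noteq> 0" and n2: "1 + q - p \<noteq> 0" and n3: "q - p \<noteq> 0" using p q qp by auto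
    ultimately show ?thesis unfolding c0_def using frac3[OF n1 n2 n3, of r] by (simp only: add.commute[of q p] minus_mult_left mult.commute[of r])
  qed
  ultimately show ?thesis by (simp add: stat_eq)
qed

lemma mu_zero: "n > t \<Longrightarrow> mu p q r t n = 0"
  using mu_rep[OF p q, where r=r and t=t and y=n] UG_zero[of t n p q r] by simp

lemma mu_alt_sums: "(\<lambda>n. (-1) ^ n * mu p q r t n) sums (Hf $ t)"
proof -
  have "(\<lambda>n. (-1) ^ n * mu p q r t n) sums (\<Sum>n\<in>{..Suc t}. (-1) ^ n * mu p q r t n)"
    by (rule sums_finite) (auto simp: mu_zero)
  then show ?thesis using H_sum[of "Suc t" t] by simp
qed

lemma tv_lower: "tv_dist (stat p q) (mu p q r t) \<ge> (1/2) * \<bar>c0 - Hf $ t\<bar>"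
proof -
  let ?d = "\<lambda>n. stat p q n - mu p q r t n"
  have sd: "summable (\<lambda>n. \<bar>?d n\<bar>)"
  proof (rule summable_comparison_test_ev[OF _ sums_summable[OF stat_sums]])
    show "\<forall>\<^sub>F n in sequentially. norm \<bar>?d n\<bar> \<le> stat p q n"
      using eventually_gt_at_top[of t] by eventually_elim (use stat_eq piw_nonneg SS_pos in \<open>simp add: mu_zero\<close>)
  qed
  have "tv_dist (stat p q) (mu p q r t) = (1/2) * (\<Sum>n. \<bar>?d n\<bar>)"
    unfolding tv_dist_def using infsum_nat_eq_suminf[of "\<lambda>n. \<bar>?d n\<bar>"] sd by simp
  moreover have "\<bar>\<Sum>n. (-1) ^ n * ?d n\<bar> \<le> (\<Sum>n. \<bar>?d n\<bar>)"
  proof -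
    have "\<bar>(-1) ^ n * ?d n\<bar> = \<bar>?d n\<bar>" for n by (simp add: abs_mult)
    then show ?thesis using summable_rabs[of "\<lambda>n. (-1) ^ n * ?d n"] sd by simp
  qed
  moreover have "(\<lambda>n. (-1) ^ n * ?d n) sums (c0 - Hf $ t)"
    using sums_diff[OF stat_alt_sums mu_alt_sums[of t]] by (simp add: right_diff_distrib)
  ultimately show ?thesis by (simp add: sums_iff)
qed

end

theorem mainTheorem2:
  fixes p q r :: real
  assumes "p > 0" and "q > 0" and "r > 0" and "p + q + r = 1" and "q > p"
    and "q / (q + r) > r + 2 * sqrt (p * q)"
  shows "\<forall>\<^sub>F t in sequentially.
     tv_dist (stat p q) (mu p q r t) \<ge>
       ((1 + q - p) * (q + r) - q) / ((1 + q - p) * (1 - 2 * p)) * (q / (q + r)) ^ t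
       - ((p / (q + r)) * (1 + 1 / (sqrt (p * q) - p)))
         / ((1 - sqrt (p / q) * (r + (1 + q - p)) / (2 * (q + r)))
            * (1 + sqrt (p / q) * (r - (1 + q - p)) / (2 * (q + r))))
         * (r + 2 * sqrt (p * q)) ^ t"
proof -
  interpret chainH p q r by unfold_locales (use assms in auto)
  define Aex where "Aex = ((1 + q - p) * (q + r) - q) / ((1 + q - p) * (1 - 2 * p))"
  define Bex where "Bex = ((p / (q + r)) * (1 + 1 / (sqrt (p * q) - p)))
         / ((1 - sqrt (p / q) * (r + (1 + q - p)) / (2 * (q + r)))
            * (1 + sqrt (p / q) * (r - (1 + q - p)) / (2 * (q + r))))"
  have alA: "alpha = 2 * Aex" by (simp add: alpha_def Aex_def)
  have A_pos: "Aex > 0"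
  proof -
    have "(1 + q - p) * (q + r) > 1 * q"
      using assms by (intro mult_strict_mono') auto
    moreover have "(1 + q - p) * (1 - 2 * p) > 0" using assms p_half by simp
    ultimately show ?thesis unfolding Aex_def by simp
  qed
  have B_pos: "Bex > 0"
  proof -
    define sp where "sp = sqrt (p / q)"
    have sp0: "sp > 0" using assms by (simp add: sp_def)
    have sp1: "sp < 1" using assms by (simp add: sp_def)
    have spq: "sqrt (p * q) > p"
    proof -
      have "sqrt (p * p) < sqrt (p * q)" using assms by (intro real_sqrt_less_mono) simp
      then show ?thesis using assms by simp
    qed
    have pos1: "1 / (sqrt (p * q) - p) > 0" using spq by simp
    have pos2: "1 + 1 / (sqrt (p * q) - p) > 0" using pos1 by linarith
    have pos3: "p / (q + r) > 0" using assms by simp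
    have num: "(p / (q + r)) * (1 + 1 / (sqrt (p * q) - p)) > 0"
      using pos2 pos3 by (rule mult_pos_pos[rotated])
    have pp: "p = 1 - q - r" using assms by simp
    have qr0: "q + r \<noteq> 0" using assms by simp
    have h1: "(r + (1 + q - p)) / (2 * (q + r)) = 1" unfolding pp using qr0 by (simp add: field_simps)
    have h2: "(r - (1 + q - p)) / (2 * (q + r)) = - (q / (q + r))" unfolding pp using qr0 by (simp add: field_simps)
    have X: "1 - sp * (r + (1 + q - p)) / (2 * (q + r)) > 0"
    proof -
      have "sp * (r + (1 + q - p)) / (2 * (q + r)) = sp" by (simp only: times_divide_eq_right[symmetric] h1 mult_1_right)
      then show ?thesis using sp1 by simp
    qed
    have qq: "q / (q + r) < 1" using assms by simp
    have "sp * (q / (q + r)) < 1 * 1" using sp0 sp1 qq assms by (intro mult_strict_mono) auto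
    then have Y: "1 + sp * (r - (1 + q - p)) / (2 * (q + r)) > 0"
    proof -
      have "sp * (r - (1 + q - p)) / (2 * (q + r)) = - (sp * (q / (q + r)))" by (simp only: times_divide_eq_right[symmetric] h2 mult_minus_right)
      then show ?thesis using \<open>sp * (q / (q + r)) < 1 * 1\<close> by simp
    qed
    show ?thesis unfolding Bex_def sp_def[symmetric] by (rule divide_pos_pos[OF num mult_pos_pos[OF X Y]])
  qed
  have ev: "\<forall>\<^sub>F t in sequentially. \<bar>WW $ t * RR ^ t\<bar> < 2 * Bex"
    using WW_lim B_pos by (simp add: tendsto_iff dist_real_def) 
  have "\<forall>\<^sub>F t in sequentially. tv_dist (stat p q) (mu p q r t) \<ge> Aex * (q / (q + r)) ^ t - Bex * (r + 2 * sqrt (p * q)) ^ t"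
  proof (rule eventually_mono[OF ev])
    fix t assume h: "\<bar>WW $ t * RR ^ t\<bar> < 2 * Bex"
    have rt: "RR ^ t * rho ^ t = 1" using RR_rho by (metis power_mult_distrib power_one)
    have w: "\<bar>WW $ t\<bar> \<le> 2 * Bex * rho ^ t"
    proof -
      have "\<bar>WW $ t\<bar> = \<bar>WW $ t * RR ^ t\<bar> * rho ^ t" using rt rho_pos RR_pos
        by (simp add: abs_mult mult.assoc)
      also have "\<dots> \<le> 2 * Bex * rho ^ t" using h rho_pos by (intro mult_right_mono) auto
      finally show ?thesis .
    qed
    have "tv_dist (stat p q) (mu p q r t) \<ge> (1/2) * \<bar>c0 - Hf $ t\<bar>" by (rule tv_lower)
    moreover have "c0 - Hf $ t = - (alpha * (- lam) ^ t + WW $ t)" by (simp add: Hf_nth)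
    moreover have "\<bar>alpha * (- lam) ^ t + WW $ t\<bar> \<ge> alpha * lam ^ t - \<bar>WW $ t\<bar>"
    proof -
      have "\<bar>alpha * (- lam) ^ t\<bar> = alpha * lam ^ t" using A_pos alA lam_pos
        by (simp add: abs_mult power_abs)
      then show ?thesis by linarith
    qed
    ultimately have "tv_dist (stat p q) (mu p q r t) \<ge> (1/2) * (alpha * lam ^ t - 2 * Bex * rho ^ t)"
      using w by simp
    then show "tv_dist (stat p q) (mu p q r t) \<ge> Aex * (q / (q + r)) ^ t - Bex * (r + 2 * sqrt (p * q)) ^ t"
      unfolding alA lam_def rho_def by simp
  qed
  then show ?thesis unfolding Aex_def Bex_def .
qed


end
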